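(* For all integers $r,q\ge1$, every $(3,2r)$-modular variety is $(2^{q+1}-1,\,2r^q)$-modular.
   Context: $\circ$ denotes relational composition, juxtaposition denotes intersection. For relations $X,Y$ and $m\ge1$, $X\circ_m Y$ denotes $X\circ Y\circ X\circ\cdots$ with $m$ factors. For $m\ge3$, a variety $\mathcal V$ is $(m,k)$-modular if every algebra in $\mathcal V$ satisfies $\alpha(\beta\circ_m\alpha\gamma)\subseteq\alpha\beta\circ_k\alpha\gamma$ for all congruences $\alpha,\beta,\gamma$. *)

theory Defs
  imports Main
begin

datatype ('f, 'v) trm = Var 'v | Fun 'f "('f, 'v) trm list"

fun wf_trm :: "('f \<Rightarrow> nat) \<Rightarrow> ('f, 'v) trm \<Rightarrow> bool" where
  "wf_trm ar (Var v) = True"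
| "wf_trm ar (Fun f ts) = (length ts = ar f \<and> (\<forall>t \<in> set ts. wf_trm ar t))"

definition wf_identities :: "('f \<Rightarrow> nat) \<Rightarrow> (('f, nat) trm \<times> ('f, nat) trm) set \<Rightarrow> bool" where
  "wf_identities ar \<Sigma> \<longleftrightarrow> (\<forall>(s, t) \<in> \<Sigma>. wf_trm ar s \<and> wf_trm ar t)"

definition algebra :: "('f \<Rightarrow> nat) \<Rightarrow> 'a set \<Rightarrow> ('f \<Rightarrow> 'a list \<Rightarrow> 'a) \<Rightarrow> bool" where
  "algebra ar A I \<longleftrightarrow> (\<forall>f xs. length xs = ar f \<and> set xs \<subseteq> A \<longrightarrow> I f xs \<in> A)"

fun eval :: "('f \<Rightarrow> 'a list \<Rightarrow> 'a) \<Rightarrow> ('v \<Rightarrow> 'a) \<Rightarrow> ('f, 'v) trm \<Rightarrow> 'a" where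
  "eval I \<rho> (Var v) = \<rho> v"
| "eval I \<rho> (Fun f ts) = I f (map (eval I \<rho>) ts)"

definition satisfies :: "'a set \<Rightarrow> ('f \<Rightarrow> 'a list \<Rightarrow> 'a) \<Rightarrow> ('f, 'v) trm \<times> ('f, 'v) trm \<Rightarrow> bool" where
  "satisfies A I e \<longleftrightarrow> (\<forall>\<rho>. range \<rho> \<subseteq> A \<longrightarrow> eval I \<rho> (fst e) = eval I \<rho> (snd e))"

definition in_variety :: "('f \<Rightarrow> nat) \<Rightarrow> (('f, nat) trm \<times> ('f, nat) trm) set
    \<Rightarrow> 'a set \<Rightarrow> ('f \<Rightarrow> 'a list \<Rightarrow> 'a) \<Rightarrow> bool" where
  "in_variety ar \<Sigma> A I \<longleftrightarrow> algebra ar A I \<and> (\<forall>e \<in> \<Sigma>. satisfies A I e)"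

definition congruence :: "('f \<Rightarrow> nat) \<Rightarrow> 'a set \<Rightarrow> ('f \<Rightarrow> 'a list \<Rightarrow> 'a) \<Rightarrow> 'a rel \<Rightarrow> bool" where
  "congruence ar A I \<theta> \<longleftrightarrow> equiv A \<theta> \<and>
     (\<forall>f xs ys. length xs = ar f \<and> list_all2 (\<lambda>x y. (x, y) \<in> \<theta>) xs ys
        \<longrightarrow> (I f xs, I f ys) \<in> \<theta>)"

fun alt :: "'a rel \<Rightarrow> 'a rel \<Rightarrow> nat \<Rightarrow> 'a rel" where
  "alt X Y 0 = Id"
| "alt X Y (Suc 0) = X"
| "alt X Y (Suc (Suc n)) = X O alt Y X (Suc n)"

text \<open>(m,k)-modularity of the variety defined by \<Sigma>, for all its algebras whose
  carrier lives in the type 'a.\<close>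
definition mk_modular :: "'a itself \<Rightarrow> ('f \<Rightarrow> nat) \<Rightarrow> (('f, nat) trm \<times> ('f, nat) trm) set
    \<Rightarrow> nat \<Rightarrow> nat \<Rightarrow> bool" where
  "mk_modular _ ar \<Sigma> m k \<longleftrightarrow>
     (\<forall>(A :: 'a set) I. in_variety ar \<Sigma> A I \<longrightarrow>
       (\<forall>\<alpha> \<beta> \<gamma>. congruence ar A I \<alpha> \<and> congruence ar A I \<beta> \<and> congruence ar A I \<gamma> \<longrightarrow>
          \<alpha> \<inter> alt \<beta> (\<alpha> \<inter> \<gamma>) m \<subseteq> alt (\<alpha> \<inter> \<beta>) (\<alpha> \<inter> \<gamma>) k))"

end

theory Submission
  imports Defs
begin


lemma equiv_unfold:
  "equiv A r \<longleftrightarrow> r \<subseteq> A \<times> A \<and> (\<forall>x\<in>A. (x,x)\<in>r) \<and> (\<forall>x y. (x,y)\<in>r \<longrightarrow> (y,x)\<in>r)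
     \<and> (\<forall>x y z. (x,y)\<in>r \<longrightarrow> (y,z)\<in>r \<longrightarrow> (x,z)\<in>r)"
  unfolding equiv_def refl_on_def sym_on_def trans_on_def by blast

lemma equiv_OO: "equiv A r \<Longrightarrow> r O r = r"
  unfolding equiv_unfold by blast

lemma alt_Suc: "alt X Y (Suc n) = alt X Y n O (if even n then X else Y)"
proof (induction X Y n rule: alt.induct)
  case (1 X Y) then show ?case by simp
next
  case (2 X Y) then show ?case by simp
next
  case (3 X Y n)
  have "alt X Y (Suc (Suc (Suc n))) = X O alt Y X (Suc (Suc n))" by simp
  also have "\<dots> = X O (alt Y X (Suc n) O (if even (Suc n) then Y else X))" using 3 by simp
  also have "\<dots> = alt X Y (Suc (Suc n)) O (if even (Suc (Suc n)) then X else Y)" by auto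
  finally show ?case .
qed

lemma alt_add: "alt X Y (m + n) = alt X Y m O (if even m then alt X Y n else alt Y X n)"
proof (induction n)
  case 0 then show ?case by simp
next
  case (Suc n)
  have "alt X Y (m + Suc n) = alt X Y (m + n) O (if even (m+n) then X else Y)"
    by (simp add: alt_Suc)
  also have "\<dots> = alt X Y m O ((if even m then alt X Y n else alt Y X n) O (if even (m+n) then X else Y))"
    using Suc by (simp add: O_assoc)
  also have "\<dots> = alt X Y m O (if even m then alt X Y (Suc n) else alt Y X (Suc n))"
    by (simp add: alt_Suc)
  finally show ?case .
qed

lemma alt_one_left: "alt X Y (Suc n) = X O alt Y X n"
  using alt_add[of X Y 1 n] by simp

lemma alt_converse:
  assumes "converse X = X" "converse Y = Y"
  shows "converse (alt X Y n) = (if even n then alt Y X n else alt X Y n)"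
  using assms
proof (induction X Y n rule: alt.induct)
  case (1 X Y) then show ?case by simp
next
  case (2 X Y) then show ?case by simp
next
  case (3 X Y n)
  have "converse (alt X Y (Suc (Suc n))) = converse (alt Y X (Suc n)) O X"
    using 3(2) by (simp add: converse_relcomp)
  also have "\<dots> = (if even (Suc (Suc n)) then alt Y X (Suc (Suc n)) else alt X Y (Suc (Suc n)))"
    using 3 alt_Suc[of Y X "Suc n"] alt_Suc[of X Y "Suc n"] by (simp del: alt.simps)
  finally show ?case .
qed


lemma alt_mono: "X \<subseteq> X' \<Longrightarrow> Y \<subseteq> Y' \<Longrightarrow> alt X Y n \<subseteq> alt X' Y' n"
proof (induction n)
  case 0 then show ?case by simp
next
  case (Suc n) then show ?case by (auto simp: alt_Suc simp del: alt.simps)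
qed

lemma alt_HH:
  assumes X: "equiv A X" and Y: "equiv A Y" and h: "h = Suc n"
  shows "alt X Y h O converse (alt X Y h) = alt X Y (2*h - 1)"
proof -
  have cX: "converse X = X" and cY: "converse Y = Y"
    using X Y unfolding equiv_def by (simp_all add: sym_conv_converse_eq)
  define Z where "Z = (if even n then X else Y)"
  define W where "W = (if even n then alt X Y (Suc n) else alt Y X (Suc n))"
  have ZZ: "Z O Z = Z"
  proof (cases "even n")
    case True then show ?thesis unfolding Z_def using equiv_OO[OF X] by (simp only: if_True)
  next
    case False then show ?thesis unfolding Z_def using equiv_OO[OF Y] by (simp only: if_False)
  qed
  have cW: "converse (alt X Y (Suc n)) = W"
    unfolding W_def using alt_converse[OF cX cY, of "Suc n"] by simp
  have ZW: "W = Z O (if even n then alt Y X n else alt X Y n)"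
    unfolding W_def Z_def by (simp add: alt_one_left del: alt.simps)
  have "alt X Y h O converse (alt X Y h) = alt X Y n O Z O W"
    unfolding h cW unfolding alt_Suc[of X Y n] Z_def by (simp add: O_assoc)
  also have "Z O W = W" unfolding ZW by (simp add: O_assoc[symmetric] ZZ)
  also have "alt X Y n O W = alt X Y (n + Suc n)"
    unfolding W_def by (rule alt_add[symmetric])
  also have "n + Suc n = 2*h - 1" using h by simp
  finally show ?thesis by (simp add: O_assoc)
qed

lemma alt_split:
  assumes "odd m"
  shows "alt X Y (m + Suc m) = alt X Y m O Y O alt X Y m"
  using assms alt_add[of X Y m "Suc m"] alt_one_left[of Y X m] by (simp del: alt.simps)

lemma alt_merge:
  assumes Y: "equiv A Y" and W: "W \<subseteq> alt Z Y k" and k: "even k" "k \<ge> 2"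
  shows "alt W Y (2*r) \<subseteq> alt Z Y (r*k)"
proof (induction r)
  case 0 then show ?case by simp
next
  case (Suc r)
  obtain j where j: "k = Suc j" "odd j" using k by (cases k) auto
  have WY: "alt Z Y k O Y = alt Z Y k"
    using j equiv_OO[OF Y] by (simp add: alt_Suc O_assoc del: alt.simps)
  have "alt W Y (2*Suc r) = alt W Y 2 O alt W Y (2*r)"
    using alt_add[of W Y 2 "2*r"] by simp
  also have "\<dots> = W O Y O alt W Y (2*r)" by (simp add: numeral_2_eq_2 O_assoc)
  also have "\<dots> \<subseteq> alt Z Y k O Y O alt Z Y (r*k)"
    using W Suc by (intro relcomp_mono) auto
  also have "\<dots> = alt Z Y k O alt Z Y (r*k)" using WY by (simp add: O_assoc[symmetric])
  also have "\<dots> = alt Z Y (k + r*k)" using k alt_add[of Z Y k "r*k"] by (simp del: alt.simps)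
  finally show ?case by (simp add: add.commute)
qed



fun subst :: "('v \<Rightarrow> ('f,'w) trm) \<Rightarrow> ('f,'v) trm \<Rightarrow> ('f,'w) trm" where
  "subst \<sigma> (Var v) = \<sigma> v"
| "subst \<sigma> (Fun f ts) = Fun f (map (subst \<sigma>) ts)"

lemma eval_subst: "eval I \<rho> (subst \<sigma> t) = eval I (\<lambda>v. eval I \<rho> (\<sigma> v)) t"
  by (induction t) (auto cong: map_cong)

lemma subst_subst: "subst \<tau> (subst \<sigma> t) = subst (\<lambda>v. subst \<tau> (\<sigma> v)) t"
  by (induction t) auto

lemma wf_subst: "wf_trm ar t \<Longrightarrow> (\<And>v. wf_trm ar (\<sigma> v)) \<Longrightarrow> wf_trm ar (subst \<sigma> t)"
  by (induction t) auto

lemma eval_in: "algebra ar A I \<Longrightarrow> range \<rho> \<subseteq> A \<Longrightarrow> wf_trm ar t \<Longrightarrow> eval I \<rho> t \<in> A"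
proof (induction t)
  case (Var v) then show ?case by auto
next
  case (Fun f ts)
  have "set (map (eval I \<rho>) ts) \<subseteq> A" using Fun by auto
  moreover have "length (map (eval I \<rho>) ts) = ar f" using Fun by simp
  ultimately show ?case using Fun(2) unfolding algebra_def by simp
qed

inductive_set eqv :: "('f \<Rightarrow> nat) \<Rightarrow> (('f,nat) trm \<times> ('f,nat) trm) set \<Rightarrow> ('f,nat) trm rel"
  for ar \<Sigma> where
  eq_refl: "(t,t) \<in> eqv ar \<Sigma>"
| eq_sym: "(s,t) \<in> eqv ar \<Sigma> \<Longrightarrow> (t,s) \<in> eqv ar \<Sigma>"
| eq_trans: "(s,t) \<in> eqv ar \<Sigma> \<Longrightarrow> (t,u) \<in> eqv ar \<Sigma> \<Longrightarrow> (s,u) \<in> eqv ar \<Sigma>"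
| eq_cong: "list_all2 (\<lambda>s t. (s,t) \<in> eqv ar \<Sigma>) ss ts \<Longrightarrow> (Fun f ss, Fun f ts) \<in> eqv ar \<Sigma>"
| eq_ax: "(s,t) \<in> \<Sigma> \<Longrightarrow> (\<forall>v. wf_trm ar (\<sigma> v)) \<Longrightarrow> (subst \<sigma> s, subst \<sigma> t) \<in> eqv ar \<Sigma>"

lemma eqv_sound:
  assumes "(s,t) \<in> eqv ar \<Sigma>" "in_variety ar \<Sigma> A I" "range \<rho> \<subseteq> A"
  shows "eval I \<rho> s = eval I \<rho> t"
  using assms
proof (induction arbitrary: \<rho> rule: eqv.induct)
  case (eq_cong ss ts f)
  have "map (eval I \<rho>) ss = map (eval I \<rho>) ts"
    using eq_cong by (induction ss ts rule: list_all2_induct) auto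
  then show ?case by simp
next
  case (eq_ax s t \<sigma>)
  have alg: "algebra ar A I" using eq_ax unfolding in_variety_def by simp
  have r: "range (\<lambda>v. eval I \<rho> (\<sigma> v)) \<subseteq> A"
    using eval_in[OF alg eq_ax(4)] eq_ax(2) by auto
  have "satisfies A I (s,t)" using eq_ax unfolding in_variety_def by auto
  then show ?case using r by (simp add: eval_subst satisfies_def)
qed auto

lemma eqv_subst:
  assumes "(s,t) \<in> eqv ar \<Sigma>" "\<And>v. wf_trm ar (\<tau> v)"
  shows "(subst \<tau> s, subst \<tau> t) \<in> eqv ar \<Sigma>"
  using assms
proof (induction rule: eqv.induct)
  case (eq_cong ss ts f)
  have "list_all2 (\<lambda>s t. (s,t) \<in> eqv ar \<Sigma>) (map (subst \<tau>) ss) (map (subst \<tau>) ts)"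
    using eq_cong by (induction ss ts rule: list_all2_induct) auto
  then show ?case by (auto intro: eqv.eq_cong)
next
  case (eq_ax s t \<sigma>)
  have "(subst (\<lambda>v. subst \<tau> (\<sigma> v)) s, subst (\<lambda>v. subst \<tau> (\<sigma> v)) t) \<in> eqv ar \<Sigma>"
    using eq_ax by (intro eqv.eq_ax) (auto intro: wf_subst)
  then show ?case by (simp add: subst_subst)
qed (auto intro: eqv.intros)

lemma equiv_eqv: "equiv UNIV (eqv ar \<Sigma>)"
  unfolding equiv_def refl_on_def sym_on_def trans_on_def by (auto intro: eqv.intros)


definition FA :: "('f \<Rightarrow> nat) \<Rightarrow> (('f,nat) trm \<times> ('f,nat) trm) set \<Rightarrow> ('f,nat) trm set set" where
  "FA ar \<Sigma> = {eqv ar \<Sigma> `` {t} | t. wf_trm ar t}"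

definition rep :: "('f \<Rightarrow> nat) \<Rightarrow> (('f,nat) trm \<times> ('f,nat) trm) set \<Rightarrow> ('f,nat) trm set \<Rightarrow> ('f,nat) trm" where
  "rep ar \<Sigma> C = (SOME t. wf_trm ar t \<and> C = eqv ar \<Sigma> `` {t})"

definition FI :: "('f \<Rightarrow> nat) \<Rightarrow> (('f,nat) trm \<times> ('f,nat) trm) set \<Rightarrow> 'f \<Rightarrow> ('f,nat) trm set list \<Rightarrow> ('f,nat) trm set" where
  "FI ar \<Sigma> f Cs = eqv ar \<Sigma> `` {Fun f (map (rep ar \<Sigma>) Cs)}"

definition kerF :: "('f \<Rightarrow> nat) \<Rightarrow> (('f,nat) trm \<times> ('f,nat) trm) set \<Rightarrow> (nat \<Rightarrow> ('f,nat) trm) \<Rightarrow> ('f,nat) trm set rel" where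
  "kerF ar \<Sigma> \<tau> = {(C,D). C \<in> FA ar \<Sigma> \<and> D \<in> FA ar \<Sigma> \<and>
      (subst \<tau> (rep ar \<Sigma> C), subst \<tau> (rep ar \<Sigma> D)) \<in> eqv ar \<Sigma>}"

lemma rep_in:
  assumes "C \<in> FA ar \<Sigma>"
  shows "wf_trm ar (rep ar \<Sigma> C) \<and> C = eqv ar \<Sigma> `` {rep ar \<Sigma> C}"
proof -
  obtain t where "wf_trm ar t" "C = eqv ar \<Sigma> `` {t}" using assms unfolding FA_def by blast
  then have "\<exists>t. wf_trm ar t \<and> C = eqv ar \<Sigma> `` {t}" by blast
  then show ?thesis unfolding rep_def by (rule someI_ex)
qed

lemma class_in: "wf_trm ar u \<Longrightarrow> eqv ar \<Sigma> `` {u} \<in> FA ar \<Sigma>"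
  unfolding FA_def by blast

lemma class_eq_iff: "eqv ar \<Sigma> `` {s} = eqv ar \<Sigma> `` {t} \<longleftrightarrow> (s,t) \<in> eqv ar \<Sigma>"
  using eq_equiv_class_iff[OF equiv_eqv] by blast

lemma rep_class: "wf_trm ar u \<Longrightarrow> (rep ar \<Sigma> (eqv ar \<Sigma> `` {u}), u) \<in> eqv ar \<Sigma>"
  using rep_in[OF class_in[of ar u \<Sigma>]] class_eq_iff by metis

lemma FA_alg: "algebra ar (FA ar \<Sigma>) (FI ar \<Sigma>)"
  unfolding algebra_def
proof (intro allI impI)
  fix f Cs
  assume a: "length Cs = ar f \<and> set Cs \<subseteq> FA ar \<Sigma>"
  have "wf_trm ar (Fun f (map (rep ar \<Sigma>) Cs))" using a rep_in by auto
  then show "FI ar \<Sigma> f Cs \<in> FA ar \<Sigma>" unfolding FI_def by (rule class_in)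
qed

lemma eval_F:
  assumes "wf_trm ar u" "range \<rho> \<subseteq> FA ar \<Sigma>"
  shows "eval (FI ar \<Sigma>) \<rho> u = eqv ar \<Sigma> `` {subst (\<lambda>v. rep ar \<Sigma> (\<rho> v)) u}"
  using assms
proof (induction u)
  case (Var v)
  then show ?case using rep_in[of "\<rho> v" ar \<Sigma>] by auto
next
  case (Fun f ts)
  let ?\<sigma> = "\<lambda>v. rep ar \<Sigma> (\<rho> v)"
  have wfs: "\<And>v. wf_trm ar (?\<sigma> v)" using Fun(3) rep_in by blast
  have "list_all2 (\<lambda>s t. (s,t) \<in> eqv ar \<Sigma>) (map (rep ar \<Sigma>) (map (eval (FI ar \<Sigma>) \<rho>) ts))
          (map (subst ?\<sigma>) ts)"
    unfolding list_all2_map1 list_all2_map2 list_all2_same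
  proof
    fix t assume t: "t \<in> set ts"
    have wt: "wf_trm ar (subst ?\<sigma> t)" using Fun(2) t wfs by (auto intro: wf_subst)
    show "(rep ar \<Sigma> (eval (FI ar \<Sigma>) \<rho> t), subst ?\<sigma> t) \<in> eqv ar \<Sigma>"
      using Fun(1)[OF t] Fun(2,3) t rep_class[OF wt] by auto
  qed
  then have "(Fun f (map (rep ar \<Sigma>) (map (eval (FI ar \<Sigma>) \<rho>) ts)), subst ?\<sigma> (Fun f ts)) \<in> eqv ar \<Sigma>"
    by (simp add: eqv.eq_cong)
  then have "eqv ar \<Sigma> `` {Fun f (map (rep ar \<Sigma>) (map (eval (FI ar \<Sigma>) \<rho>) ts))}
     = eqv ar \<Sigma> `` {subst ?\<sigma> (Fun f ts)}" by (rule class_eq_iff[THEN iffD2])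
  moreover have "eval (FI ar \<Sigma>) \<rho> (Fun f ts) = eqv ar \<Sigma> `` {Fun f (map (rep ar \<Sigma>) (map (eval (FI ar \<Sigma>) \<rho>) ts))}"
    by (simp only: eval.simps FI_def)
  ultimately show ?case by simp
qed

lemma FA_variety:
  assumes "wf_identities ar \<Sigma>"
  shows "in_variety ar \<Sigma> (FA ar \<Sigma>) (FI ar \<Sigma>)"
  unfolding in_variety_def
proof (intro conjI FA_alg ballI)
  fix e assume e: "e \<in> \<Sigma>"
  obtain s t where st: "e = (s,t)" by (cases e)
  have w: "wf_trm ar s" "wf_trm ar t" using assms e st unfolding wf_identities_def by auto
  show "satisfies (FA ar \<Sigma>) (FI ar \<Sigma>) e"
    unfolding satisfies_def
  proof (intro allI impI)
    fix \<rho> :: "nat \<Rightarrow> _" assume r: "range \<rho> \<subseteq> FA ar \<Sigma>"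
    have wfs: "\<forall>v. wf_trm ar (rep ar \<Sigma> (\<rho> v))" using r rep_in by blast
    have "(subst (\<lambda>v. rep ar \<Sigma> (\<rho> v)) s, subst (\<lambda>v. rep ar \<Sigma> (\<rho> v)) t) \<in> eqv ar \<Sigma>"
      using e st wfs by (auto intro: eqv.eq_ax)
    then show "eval (FI ar \<Sigma>) \<rho> (fst e) = eval (FI ar \<Sigma>) \<rho> (snd e)"
      using st eval_F[OF w(1) r] eval_F[OF w(2) r] by (simp add: class_eq_iff)
  qed
qed



lemma alt_chain:
  "(a,b) \<in> alt X Y n \<Longrightarrow> \<exists>g. g 0 = a \<and> g n = b \<and> (\<forall>i<n. (g i, g (Suc i)) \<in> (if even i then X else Y))"
proof (induction n arbitrary: b)
  case 0 then show ?case by (intro exI[of _ "\<lambda>_. a"]) auto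
next
  case (Suc n)
  then obtain c where c: "(a,c) \<in> alt X Y n" "(c,b) \<in> (if even n then X else Y)"
    by (auto simp: alt_Suc simp del: alt.simps)
  obtain g where g: "g 0 = a" "g n = c" "\<forall>i<n. (g i, g (Suc i)) \<in> (if even i then X else Y)"
    using Suc.IH[OF c(1)] by blast
  show ?case
    apply (rule exI[of _ "g(Suc n := b)"])
    using g c by (auto simp: less_Suc_eq)
qed

lemma chain_alt:
  "(\<forall>i<n. (g i, g (Suc i)) \<in> (if even i then X else Y)) \<Longrightarrow> (g 0, g n) \<in> alt X Y n"
proof (induction n)
  case 0 then show ?case by simp
next
  case (Suc n)
  then have "(g 0, g n) \<in> alt X Y n" "(g n, g (Suc n)) \<in> (if even n then X else Y)" by auto
  then show ?case by (auto simp: alt_Suc simp del: alt.simps)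
qed

lemma kerF_cong:
  assumes wt: "\<And>v. wf_trm ar (\<tau> v)"
  shows "congruence ar (FA ar \<Sigma>) (FI ar \<Sigma>) (kerF ar \<Sigma> \<tau>)"
  unfolding congruence_def
proof (intro conjI allI impI)
  show "equiv (FA ar \<Sigma>) (kerF ar \<Sigma> \<tau>)"
    unfolding equiv_def refl_on_def sym_on_def trans_on_def kerF_def
    by (auto intro: eqv.intros)
next
  fix f Cs Ds
  assume a: "length Cs = ar f \<and> list_all2 (\<lambda>x y. (x, y) \<in> kerF ar \<Sigma> \<tau>) Cs Ds"
  have CD: "set Cs \<subseteq> FA ar \<Sigma>" "set Ds \<subseteq> FA ar \<Sigma>" "length Ds = ar f"
    using a by (auto simp: kerF_def list_all2_conv_all_nth in_set_conv_nth)
  have inF: "FI ar \<Sigma> f Cs \<in> FA ar \<Sigma>" "FI ar \<Sigma> f Ds \<in> FA ar \<Sigma>"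
    using FA_alg[of ar \<Sigma>] CD a unfolding algebra_def by auto
  have wC: "wf_trm ar (Fun f (map (rep ar \<Sigma>) Cs))" using CD a rep_in by fastforce
  have wD: "wf_trm ar (Fun f (map (rep ar \<Sigma>) Ds))" using CD rep_in by fastforce
  have e1: "(subst \<tau> (rep ar \<Sigma> (FI ar \<Sigma> f Cs)), subst \<tau> (Fun f (map (rep ar \<Sigma>) Cs))) \<in> eqv ar \<Sigma>"
    unfolding FI_def by (rule eqv_subst[OF rep_class[OF wC] wt])
  have e3: "(subst \<tau> (rep ar \<Sigma> (FI ar \<Sigma> f Ds)), subst \<tau> (Fun f (map (rep ar \<Sigma>) Ds))) \<in> eqv ar \<Sigma>"
    unfolding FI_def by (rule eqv_subst[OF rep_class[OF wD] wt])
  have "list_all2 (\<lambda>s t. (s,t) \<in> eqv ar \<Sigma>) (map (subst \<tau>) (map (rep ar \<Sigma>) Cs)) (map (subst \<tau>) (map (rep ar \<Sigma>) Ds))"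
    unfolding list_all2_map1 list_all2_map2 using a
    by (auto simp: kerF_def elim: list_all2_mono)
  then have e2: "(subst \<tau> (Fun f (map (rep ar \<Sigma>) Cs)), subst \<tau> (Fun f (map (rep ar \<Sigma>) Ds))) \<in> eqv ar \<Sigma>"
    by (simp add: eqv.eq_cong del: map_map)
  show "(FI ar \<Sigma> f Cs, FI ar \<Sigma> f Ds) \<in> kerF ar \<Sigma> \<tau>"
    unfolding kerF_def using inF e1 e2 e3 by (blast intro: eqv.intros)
qed

lemma kerF_Var:
  assumes wt: "\<And>v. wf_trm ar (\<tau> v)" and "(\<tau> i, \<tau> j) \<in> eqv ar \<Sigma>"
  shows "(eqv ar \<Sigma> `` {Var i}, eqv ar \<Sigma> `` {Var j}) \<in> kerF ar \<Sigma> \<tau>"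
proof -
  have "(subst \<tau> (rep ar \<Sigma> (eqv ar \<Sigma> `` {Var i})), subst \<tau> (Var i)) \<in> eqv ar \<Sigma>"
    by (rule eqv_subst[OF rep_class wt]) simp
  moreover have "(subst \<tau> (rep ar \<Sigma> (eqv ar \<Sigma> `` {Var j})), subst \<tau> (Var j)) \<in> eqv ar \<Sigma>"
    by (rule eqv_subst[OF rep_class wt]) simp
  ultimately show ?thesis unfolding kerF_def using assms(2) class_in[of ar "Var i" \<Sigma>] class_in[of ar "Var j" \<Sigma>]
    by (auto intro: eqv.intros)
qed



definition sa :: "nat \<Rightarrow> ('f,nat) trm" where
  "sa v = (if v = 2 then Var 1 else if v = 3 then Var 0 else Var v)"
definition sb :: "nat \<Rightarrow> ('f,nat) trm" where
  "sb v = (if v = 1 then Var 0 else if v = 2 then Var 3 else Var v)"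
definition sg :: "nat \<Rightarrow> ('f,nat) trm" where
  "sg v = (if v = 2 then Var 1 else Var v)"

lemma wf_s: "wf_trm ar (sa v)" "wf_trm ar (sb v)" "wf_trm ar (sg v)"
  unfolding sa_def sb_def sg_def by auto

lemma day_terms:
  fixes ar :: "'f \<Rightarrow> nat" and \<Sigma> :: "(('f, nat) trm \<times> ('f, nat) trm) set"
  assumes wfi: "wf_identities ar \<Sigma>" and r: "r \<ge> 1"
    and hyp: "mk_modular TYPE(('f, nat) trm set) ar \<Sigma> 3 (2 * r)"
  shows "\<exists>t. (\<forall>i\<le>2*r. wf_trm ar (t i)) \<and> (t 0, Var 0) \<in> eqv ar \<Sigma> \<and> (t (2*r), Var 3) \<in> eqv ar \<Sigma>
     \<and> (\<forall>i\<le>2*r. (subst sa (t i), Var 0) \<in> eqv ar \<Sigma>)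
     \<and> (\<forall>i<2*r. even i \<longrightarrow> (subst sb (t i), subst sb (t (Suc i))) \<in> eqv ar \<Sigma>)
     \<and> (\<forall>i<2*r. odd i \<longrightarrow> (subst sg (t i), subst sg (t (Suc i))) \<in> eqv ar \<Sigma>)"
proof -
  let ?X = "\<lambda>i. eqv ar \<Sigma> `` {Var i}"
  let ?a = "kerF ar \<Sigma> sa" and ?b = "kerF ar \<Sigma> sb" and ?g = "kerF ar \<Sigma> sg"
  have ca: "congruence ar (FA ar \<Sigma>) (FI ar \<Sigma>) ?a" by (rule kerF_cong) (rule wf_s)
  have cb: "congruence ar (FA ar \<Sigma>) (FI ar \<Sigma>) ?b" by (rule kerF_cong) (rule wf_s)
  have cg: "congruence ar (FA ar \<Sigma>) (FI ar \<Sigma>) ?g" by (rule kerF_cong) (rule wf_s)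
  have incl: "?a \<inter> alt ?b (?a \<inter> ?g) 3 \<subseteq> alt (?a \<inter> ?b) (?a \<inter> ?g) (2*r)"
    using hyp FA_variety[OF wfi] ca cb cg unfolding mk_modular_def by blast
  have k: "\<And>\<tau> i j. (\<And>v. wf_trm ar (\<tau> v)) \<Longrightarrow> \<tau> i = \<tau> j \<Longrightarrow> (?X i, ?X j) \<in> kerF ar \<Sigma> \<tau>"
    by (rule kerF_Var) (auto intro: eqv.intros)
  have "(?X 0, ?X 3) \<in> ?a" by (rule k) (auto simp: wf_s sa_def)
  moreover have "(?X 0, ?X 1) \<in> ?b" by (rule k) (auto simp: wf_s sb_def)
  moreover have "(?X 1, ?X 2) \<in> ?a \<inter> ?g" using k[of sa 1 2] k[of sg 1 2] by (auto simp: wf_s sa_def sg_def)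
  moreover have "(?X 2, ?X 3) \<in> ?b" by (rule k) (auto simp: wf_s sb_def)
  ultimately have "(?X 0, ?X 3) \<in> ?a \<inter> alt ?b (?a \<inter> ?g) 3"
    by (auto simp: numeral_3_eq_3)
  with incl have "(?X 0, ?X 3) \<in> alt (?a \<inter> ?b) (?a \<inter> ?g) (2*r)" by blast
  then have "\<exists>g. g 0 = ?X 0 \<and> g (2*r) = ?X 3 \<and>
    (\<forall>i<2*r. (g i, g (Suc i)) \<in> (if even i then ?a \<inter> ?b else ?a \<inter> ?g))"
    by (rule alt_chain)
  then obtain g where g: "g 0 = ?X 0" "g (2*r) = ?X 3"
    "\<forall>i<2*r. (g i, g (Suc i)) \<in> (if even i then ?a \<inter> ?b else ?a \<inter> ?g)"
    by (elim exE conjE)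
  have ga: "\<forall>i<2*r. (g i, g (Suc i)) \<in> ?a" using g(3) by (auto split: if_splits)
  have gF: "g i \<in> FA ar \<Sigma>" if "i \<le> 2*r" for i
  proof (cases "i < 2*r")
    case True then have "(g i, g (Suc i)) \<in> ?a" using ga by blast
    then show ?thesis unfolding kerF_def by simp
  next
    case False then have "i = 2*r" using that by simp
    then show ?thesis using g(2) class_in[of ar "Var 3" \<Sigma>] by simp
  qed
  define t where "t i = rep ar \<Sigma> (g i)" for i
  have wt: "\<forall>i\<le>2*r. wf_trm ar (t i)" unfolding t_def using gF rep_in by blast
  have t0: "(t 0, Var 0) \<in> eqv ar \<Sigma>" unfolding t_def g(1) by (rule rep_class) simp
  have tk: "(t (2*r), Var 3) \<in> eqv ar \<Sigma>" unfolding t_def g(2) by (rule rep_class) simp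
  have aX: "(g 0, g i) \<in> ?a" if "i \<le> 2*r" for i
    using that
  proof (induction i)
    case 0 then show ?case using gF[of 0] ca unfolding congruence_def equiv_unfold by blast
  next
    case (Suc i)
    then have "(g 0, g i) \<in> ?a" "(g i, g (Suc i)) \<in> ?a" using ga by auto
    then show ?case using ca unfolding congruence_def equiv_unfold by blast
  qed
  have tA: "(subst sa (t i), Var 0) \<in> eqv ar \<Sigma>" if "i \<le> 2*r" for i
  proof -
    have "(subst sa (t 0), subst sa (t i)) \<in> eqv ar \<Sigma>" using aX[OF that] unfolding kerF_def t_def by simp
    moreover have "(subst sa (t 0), subst sa (Var 0)) \<in> eqv ar \<Sigma>" by (rule eqv_subst[OF t0 wf_s(1)])
    ultimately show ?thesis by (auto simp: sa_def intro: eqv.intros)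
  qed
  have tB: "(subst sb (t i), subst sb (t (Suc i))) \<in> eqv ar \<Sigma>" if "i < 2*r" "even i" for i
    using g(3) that unfolding kerF_def t_def by auto
  have tG: "(subst sg (t i), subst sg (t (Suc i))) \<in> eqv ar \<Sigma>" if "i < 2*r" "odd i" for i
    using g(3) that unfolding kerF_def t_def by auto
  show ?thesis using wt t0 tk tA tB tG by blast
qed



definition compat :: "('f \<Rightarrow> nat) \<Rightarrow> ('f \<Rightarrow> 'a list \<Rightarrow> 'a) \<Rightarrow> 'a rel \<Rightarrow> bool" where
  "compat ar I R \<longleftrightarrow> (\<forall>f xs ys. length xs = ar f \<and> list_all2 (\<lambda>x y. (x, y) \<in> R) xs ys
        \<longrightarrow> (I f xs, I f ys) \<in> R)"

lemma cong_compat: "congruence ar A I R \<Longrightarrow> compat ar I R"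
  unfolding congruence_def compat_def by blast

lemma compat_Int: "compat ar I R \<Longrightarrow> compat ar I S \<Longrightarrow> compat ar I (R \<inter> S)"
  unfolding compat_def
proof (intro allI impI)
  fix f xs ys
  assume R: "\<forall>f xs ys. length xs = ar f \<and> list_all2 (\<lambda>x y. (x, y) \<in> R) xs ys \<longrightarrow> (I f xs, I f ys) \<in> R"
    and S: "\<forall>f xs ys. length xs = ar f \<and> list_all2 (\<lambda>x y. (x, y) \<in> S) xs ys \<longrightarrow> (I f xs, I f ys) \<in> S"
    and a: "length xs = ar f \<and> list_all2 (\<lambda>x y. (x, y) \<in> R \<inter> S) xs ys"
  have "list_all2 (\<lambda>x y. (x, y) \<in> R) xs ys" "list_all2 (\<lambda>x y. (x, y) \<in> S) xs ys"
    using a by (auto elim: list_all2_mono)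
  then show "(I f xs, I f ys) \<in> R \<inter> S" using R S a by blast
qed

lemma compat_Id: "compat ar I Id"
  unfolding compat_def by (auto simp: list_all2_eq[symmetric])

lemma list_all2_relcomp:
  "list_all2 (\<lambda>x y. (x, y) \<in> R O S) xs ys \<Longrightarrow>
   \<exists>zs. list_all2 (\<lambda>x y. (x, y) \<in> R) xs zs \<and> list_all2 (\<lambda>x y. (x, y) \<in> S) zs ys"
proof (induction xs ys rule: list_all2_induct)
  case Nil then show ?case by auto
next
  case (Cons x xs y ys)
  then obtain z zs where "(x,z) \<in> R" "(z,y) \<in> S" "list_all2 (\<lambda>x y. (x, y) \<in> R) xs zs"
    "list_all2 (\<lambda>x y. (x, y) \<in> S) zs ys" by blast
  then show ?case by (intro exI[of _ "z # zs"]) auto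
qed

lemma compat_O: "compat ar I R \<Longrightarrow> compat ar I S \<Longrightarrow> compat ar I (R O S)"
  unfolding compat_def
proof (intro allI impI)
  fix f xs ys
  assume R: "\<forall>f xs ys. length xs = ar f \<and> list_all2 (\<lambda>x y. (x, y) \<in> R) xs ys \<longrightarrow> (I f xs, I f ys) \<in> R"
    and S: "\<forall>f xs ys. length xs = ar f \<and> list_all2 (\<lambda>x y. (x, y) \<in> S) xs ys \<longrightarrow> (I f xs, I f ys) \<in> S"
    and a: "length xs = ar f \<and> list_all2 (\<lambda>x y. (x, y) \<in> R O S) xs ys"
  then obtain zs where z: "list_all2 (\<lambda>x y. (x, y) \<in> R) xs zs" "list_all2 (\<lambda>x y. (x, y) \<in> S) zs ys"
    using list_all2_relcomp by blast
  have "length zs = ar f" using z(1) a by (simp add: list_all2_lengthD)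
  then show "(I f xs, I f ys) \<in> R O S" using R S a z by blast
qed

lemma compat_alt: "compat ar I X \<Longrightarrow> compat ar I Y \<Longrightarrow> compat ar I (alt X Y n)"
proof (induction n)
  case 0 then show ?case by (simp add: compat_Id)
next
  case (Suc n) then show ?case by (simp add: alt_Suc compat_O del: alt.simps)
qed

lemma compat_eval:
  assumes "compat ar I R" "wf_trm ar t" "\<And>v. (\<rho>1 v, \<rho>2 v) \<in> R"
  shows "(eval I \<rho>1 t, eval I \<rho>2 t) \<in> R"
  using assms(2)
proof (induction t)
  case (Var v) then show ?case using assms(3) by simp
next
  case (Fun f ts)
  have "list_all2 (\<lambda>x y. (x, y) \<in> R) (map (eval I \<rho>1) ts) (map (eval I \<rho>2) ts)"
    unfolding list_all2_map1 list_all2_map2 list_all2_same using Fun by auto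
  then show ?case using assms(1) Fun(2) unfolding compat_def by simp
qed

lemma Range_alt: "Range (alt X Y (Suc n)) \<subseteq> Range X \<union> Range Y"
  by (auto simp: alt_Suc simp del: alt.simps split: if_splits)

definition r4 :: "'a \<Rightarrow> 'a \<Rightarrow> 'a \<Rightarrow> 'a \<Rightarrow> nat \<Rightarrow> 'a" where
  "r4 a b c d v = (if v = 0 then a else if v = 1 then b else if v = 2 then c else if v = 3 then d else a)"

lemma r4_sa: "(\<lambda>v. eval I (r4 a b c d) (sa v)) = r4 a b b a"
  by (rule ext) (simp add: sa_def r4_def)
lemma r4_sb: "(\<lambda>v. eval I (r4 a b c d) (sb v)) = r4 a a d d"
  by (rule ext) (simp add: sb_def r4_def)
lemma r4_sg: "(\<lambda>v. eval I (r4 a b c d) (sg v)) = r4 a b b d"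
  by (rule ext) (simp add: sg_def r4_def)
lemma r4_range: "a \<in> A \<Longrightarrow> b \<in> A \<Longrightarrow> c \<in> A \<Longrightarrow> d \<in> A \<Longrightarrow> range (r4 a b c d) \<subseteq> A"
  by (auto simp: r4_def)
lemma r4_rel: "(a,a') \<in> R \<Longrightarrow> (b,b') \<in> R \<Longrightarrow> (c,c') \<in> R \<Longrightarrow> (d,d') \<in> R \<Longrightarrow>
  (r4 a b c d v, r4 a' b' c' d' v) \<in> R"
  by (auto simp: r4_def)



lemma lemma_L:
  fixes A :: "'a set" and t :: "nat \<Rightarrow> ('f,nat) trm"
  assumes V: "in_variety ar \<Sigma> A I"
    and wt: "\<forall>i\<le>2*r. wf_trm ar (t i)" and t0: "(t 0, Var 0) \<in> eqv ar \<Sigma>"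
    and tk: "(t (2*r), Var 3) \<in> eqv ar \<Sigma>"
    and tA: "\<forall>i\<le>2*r. (subst sa (t i), Var 0) \<in> eqv ar \<Sigma>"
    and tB: "\<forall>i<2*r. even i \<longrightarrow> (subst sb (t i), subst sb (t (Suc i))) \<in> eqv ar \<Sigma>"
    and tG: "\<forall>i<2*r. odd i \<longrightarrow> (subst sg (t i), subst sg (t (Suc i))) \<in> eqv ar \<Sigma>"
    and ca: "congruence ar A I \<alpha>" and cg: "congruence ar A I \<gamma>"
    and cH: "compat ar I H"
    and ad: "(a,d) \<in> \<alpha>" and bc: "(b,c) \<in> \<alpha> \<inter> \<gamma>"
    and H: "(a,x) \<in> H" "(b,x) \<in> H" "(c,y) \<in> H" "(d,y) \<in> H" and xy: "x \<in> A" "y \<in> A"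
  shows "(a,d) \<in> alt (\<alpha> \<inter> (H O converse H)) (\<alpha> \<inter> \<gamma>) (2*r)"
proof -
  have eA: "equiv A \<alpha>" and eG: "equiv A \<gamma>" using ca cg unfolding congruence_def by auto
  have inA: "a \<in> A" "b \<in> A" "c \<in> A" "d \<in> A" using eA ad bc unfolding equiv_def by auto
  define T where "T i a b c d = eval I (r4 a b c d) (t i)" for i a b c d
  have snd: "eval I \<rho> s = eval I \<rho> s'" if "(s,s') \<in> eqv ar \<Sigma>" "range \<rho> \<subseteq> A" for \<rho> s s'
    using eqv_sound[OF that(1) V that(2)] .
  have T0: "T 0 a b c d = a"
    using snd[OF t0 r4_range[OF inA]] unfolding T_def by (simp add: r4_def)
  have Tk: "T (2*r) a b c d = d"
    using snd[OF tk r4_range[OF inA]] unfolding T_def by (simp add: r4_def)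
  have TA: "T i a b b a = a" if "i \<le> 2*r" for i
    using snd[OF tA[rule_format, OF that] r4_range[OF inA(1,2,3,4)]] unfolding T_def
    by (simp add: eval_subst r4_sa) (simp add: r4_def)
  have TB: "T i x x y y = T (Suc i) x x y y" if "i < 2*r" "even i" for i
    using snd[OF tB[rule_format, OF that] r4_range[OF xy(1) xy(1) xy(2) xy(2)]] unfolding T_def
    by (simp add: eval_subst r4_sb)
  have TG: "T i a b b d = T (Suc i) a b b d" if "i < 2*r" "odd i" for i
    using snd[OF tG[rule_format, OF that] r4_range[OF inA(1,2,2,4)]] unfolding T_def
    by (simp add: eval_subst r4_sg)
  define u where "u i = T i a b c d" for i
  have comp_rel: "(T i a b c d, T i a' b' c' d') \<in> R"
    if "compat ar I R" "i \<le> 2*r" "(a,a') \<in> R" "(b,b') \<in> R" "(c,c') \<in> R" "(d,d') \<in> R" for R i a' b' c' d'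
    unfolding T_def by (rule compat_eval[OF that(1) wt[rule_format, OF that(2)]]) (rule r4_rel[OF that(3-6)])
  have rA: "(p,p) \<in> \<alpha>" "(p,p) \<in> \<gamma>" if "p \<in> A" for p using eA eG that unfolding equiv_def refl_on_def by auto
  have aS: "(q,p) \<in> \<alpha>" if "(p,q) \<in> \<alpha>" for p q using eA that unfolding equiv_def sym_on_def by blast
  have gS: "(q,p) \<in> \<gamma>" if "(p,q) \<in> \<gamma>" for p q using eG that unfolding equiv_def sym_on_def by blast
  have aT: "(p,s) \<in> \<alpha>" if "(p,q) \<in> \<alpha>" "(q,s) \<in> \<alpha>" for p q s using eA that unfolding equiv_def trans_on_def by blast
  have gT: "(p,s) \<in> \<gamma>" if "(p,q) \<in> \<gamma>" "(q,s) \<in> \<gamma>" for p q s using eG that unfolding equiv_def trans_on_def by blast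
  have uA: "(u i, a) \<in> \<alpha>" if "i \<le> 2*r" for i
  proof -
    have "(T i a b c d, T i a b b a) \<in> \<alpha>"
      using comp_rel[OF cong_compat[OF ca] that rA(1)[OF inA(1)] rA(1)[OF inA(2)] aS aS[OF ad]] bc by blast
    then show ?thesis using TA[OF that] unfolding u_def by simp
  qed
  have step: "(u i, u (Suc i)) \<in> (if even i then \<alpha> \<inter> (H O converse H) else \<alpha> \<inter> \<gamma>)" if "i < 2*r" for i
  proof (cases "even i")
    case True
    have "(u i, T i x x y y) \<in> H" unfolding u_def using that by (intro comp_rel[OF cH _ H]) simp
    moreover have "(u (Suc i), T (Suc i) x x y y) \<in> H" unfolding u_def using that by (intro comp_rel[OF cH _ H]) simp
    ultimately have "(u i, u (Suc i)) \<in> H O converse H" using TB[OF that True] by auto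
    moreover have "(u i, u (Suc i)) \<in> \<alpha>"
    proof -
      have l: "i \<le> 2*r" "Suc i \<le> 2*r" using that by auto
      show ?thesis by (rule aT[OF uA[OF l(1)] aS[OF uA[OF l(2)]]])
    qed
    ultimately show ?thesis using True by simp
  next
    case False
    have cd: "compat ar I (\<alpha> \<inter> \<gamma>)" by (rule compat_Int[OF cong_compat[OF ca] cong_compat[OF cg]])
    have sy: "(c,b) \<in> \<alpha> \<inter> \<gamma>" using bc aS gS by blast
    have rr: "(p,p) \<in> \<alpha> \<inter> \<gamma>" if "p \<in> A" for p using rA[OF that] by blast
    have "(u i, T i a b b d) \<in> \<alpha> \<inter> \<gamma>" unfolding u_def
      using that by (intro comp_rel[OF cd _ rr[OF inA(1)] rr[OF inA(2)] sy rr[OF inA(4)]]) simp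
    moreover have "(u (Suc i), T (Suc i) a b b d) \<in> \<alpha> \<inter> \<gamma>" unfolding u_def
      using that by (intro comp_rel[OF cd _ rr[OF inA(1)] rr[OF inA(2)] sy rr[OF inA(4)]]) simp
    ultimately have "(u i, u (Suc i)) \<in> \<alpha> \<inter> \<gamma>" using TG[OF that False] aS gS aT gT
      by (metis IntD1 IntD2 IntI)
    then show ?thesis using False by simp
  qed
  have "(u 0, u (2*r)) \<in> alt (\<alpha> \<inter> (H O converse H)) (\<alpha> \<inter> \<gamma>) (2*r)"
    by (rule chain_alt) (use step in blast)
  then show ?thesis using T0 Tk unfolding u_def by simp
qed



lemma main_ind:
  fixes A :: "'a set" and t :: "nat \<Rightarrow> ('f,nat) trm"
  assumes V: "in_variety ar \<Sigma> A I" and r: "r \<ge> 1"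
    and wt: "\<forall>i\<le>2*r. wf_trm ar (t i)" and t0: "(t 0, Var 0) \<in> eqv ar \<Sigma>"
    and tk: "(t (2*r), Var 3) \<in> eqv ar \<Sigma>"
    and tA: "\<forall>i\<le>2*r. (subst sa (t i), Var 0) \<in> eqv ar \<Sigma>"
    and tB: "\<forall>i<2*r. even i \<longrightarrow> (subst sb (t i), subst sb (t (Suc i))) \<in> eqv ar \<Sigma>"
    and tG: "\<forall>i<2*r. odd i \<longrightarrow> (subst sg (t i), subst sg (t (Suc i))) \<in> eqv ar \<Sigma>"
    and ca: "congruence ar A I \<alpha>" and cb: "congruence ar A I \<beta>" and cg: "congruence ar A I \<gamma>"
  shows "\<alpha> \<inter> alt \<beta> (\<alpha> \<inter> \<gamma>) (2*2^q - 1) \<subseteq> alt (\<alpha> \<inter> \<beta>) (\<alpha> \<inter> \<gamma>) (2*r^q)"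
proof (induction q)
  have eA: "equiv A \<alpha>" and eB: "equiv A \<beta>" and eG: "equiv A \<gamma>"
    using ca cb cg unfolding congruence_def by auto
  have eD: "equiv A (\<alpha> \<inter> \<gamma>)" using eA eG unfolding equiv_def refl_on_def sym_on_def trans_on_def by blast
  case 0
  show ?case
  proof
    fix p assume p: "p \<in> \<alpha> \<inter> alt \<beta> (\<alpha> \<inter> \<gamma>) (2 * 2 ^ 0 - 1)"
    obtain u v where uv: "p = (u,v)" by (cases p)
    have v: "v \<in> A" using p uv eA unfolding equiv_def by auto
    have "(v,v) \<in> \<alpha> \<inter> \<gamma>" using v eD unfolding equiv_def refl_on_def by blast
    then show "p \<in> alt (\<alpha> \<inter> \<beta>) (\<alpha> \<inter> \<gamma>) (2 * r ^ 0)" using p uv by (auto simp: numeral_2_eq_2)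
  qed
next
  have eA: "equiv A \<alpha>" and eB: "equiv A \<beta>" and eG: "equiv A \<gamma>"
    using ca cb cg unfolding congruence_def by auto
  have eD: "equiv A (\<alpha> \<inter> \<gamma>)" using eA eG unfolding equiv_def refl_on_def sym_on_def trans_on_def by blast
  case (Suc q)
  define h where "h = (2::nat)^q"
  define m where "m = 2*h - 1"
  define H where "H = alt \<beta> (\<alpha> \<inter> \<gamma>) h"
  have h1: "h \<ge> 1" unfolding h_def by simp
  have om: "odd m" unfolding m_def using h1 by simp
  have mm: "2 * 2 ^ Suc q - 1 = m + Suc m" unfolding m_def h_def by simp
  have HH: "H O converse H = alt \<beta> (\<alpha> \<inter> \<gamma>) m"
    unfolding H_def m_def by (rule alt_HH[OF eB eD, of h "h - 1"]) (use h1 in simp)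
  have cH: "compat ar I H" unfolding H_def
    by (intro compat_alt cong_compat[OF cb] compat_Int cong_compat[OF ca] cong_compat[OF cg])
  have RH: "Range H \<subseteq> A"
  proof -
    have "Range H \<subseteq> Range \<beta> \<union> Range (\<alpha> \<inter> \<gamma>)" unfolding H_def using Range_alt[of \<beta> "\<alpha> \<inter> \<gamma>" "h - 1"] h1 by simp
    then show ?thesis using eB eD unfolding equiv_def by blast
  qed
  have k: "even (2*r^q)" "2*r^q \<ge> 2" using r by auto
  show ?case
  proof
    fix p assume p: "p \<in> \<alpha> \<inter> alt \<beta> (\<alpha> \<inter> \<gamma>) (2 * 2 ^ Suc q - 1)"
    obtain a d where ad: "p = (a,d)" by (cases p)
    have "(a,d) \<in> alt \<beta> (\<alpha> \<inter> \<gamma>) m O (\<alpha> \<inter> \<gamma>) O alt \<beta> (\<alpha> \<inter> \<gamma>) m"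
      using p ad unfolding mm alt_split[OF om] by simp
    then obtain b c where bc: "(a,b) \<in> H O converse H" "(b,c) \<in> \<alpha> \<inter> \<gamma>" "(c,d) \<in> H O converse H"
      unfolding HH by blast
    then obtain x y where xy: "(a,x) \<in> H" "(b,x) \<in> H" "(c,y) \<in> H" "(d,y) \<in> H" by blast
    have xyA: "x \<in> A" "y \<in> A" using xy RH by auto
    have "(a,d) \<in> alt (\<alpha> \<inter> (H O converse H)) (\<alpha> \<inter> \<gamma>) (2*r)"
      using p ad by (intro lemma_L[OF V wt t0 tk tA tB tG ca cg cH _ bc(2) xy xyA]) auto
    also have "\<dots> \<subseteq> alt (alt (\<alpha> \<inter> \<beta>) (\<alpha> \<inter> \<gamma>) (2*r^q)) (\<alpha> \<inter> \<gamma>) (2*r)"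
      by (rule alt_mono) (use Suc.IH HH m_def h_def in auto)
    also have "\<dots> \<subseteq> alt (\<alpha> \<inter> \<beta>) (\<alpha> \<inter> \<gamma>) (r*(2*r^q))"
      by (rule alt_merge[OF eD _ k]) simp
    finally show "p \<in> alt (\<alpha> \<inter> \<beta>) (\<alpha> \<inter> \<gamma>) (2 * r ^ Suc q)" using ad by (simp add: mult.left_commute)
  qed
qed

theorem theorem3p3:
  fixes ar :: "'f \<Rightarrow> nat"
    and \<Sigma> :: "(('f, nat) trm \<times> ('f, nat) trm) set"
    and r q :: nat
  assumes "wf_identities ar \<Sigma>"
    and "r \<ge> 1" and "q \<ge> 1"
    and "mk_modular TYPE(('f, nat) trm set) ar \<Sigma> 3 (2 * r)"
  shows "mk_modular TYPE('a) ar \<Sigma> (2 ^ (q + 1) - 1) (2 * r ^ q)"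
proof -
  obtain t where t: "\<forall>i\<le>2*r. wf_trm ar (t i)" "(t 0, Var 0) \<in> eqv ar \<Sigma>" "(t (2*r), Var 3) \<in> eqv ar \<Sigma>"
     "\<forall>i\<le>2*r. (subst sa (t i), Var 0) \<in> eqv ar \<Sigma>"
     "\<forall>i<2*r. even i \<longrightarrow> (subst sb (t i), subst sb (t (Suc i))) \<in> eqv ar \<Sigma>"
     "\<forall>i<2*r. odd i \<longrightarrow> (subst sg (t i), subst sg (t (Suc i))) \<in> eqv ar \<Sigma>"
    using day_terms[OF assms(1,2,4)] by blast
  have e: "2 ^ (q + 1) - 1 = 2 * 2 ^ q - (1::nat)" by simp
  show ?thesis
    unfolding mk_modular_def e
  proof (intro allI impI, elim conjE)
    fix A :: "'a set" and I \<alpha> \<beta> \<gamma>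
    assume "in_variety ar \<Sigma> A I" "congruence ar A I \<alpha>" "congruence ar A I \<beta>" "congruence ar A I \<gamma>"
    then show "\<alpha> \<inter> alt \<beta> (\<alpha> \<inter> \<gamma>) (2 * 2 ^ q - 1) \<subseteq> alt (\<alpha> \<inter> \<beta>) (\<alpha> \<inter> \<gamma>) (2 * r ^ q)"
      using main_ind[OF _ assms(2) t] by blast
  qed
qed

end
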